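(* Let $F(t)=\sum_{j\ge0}a_jt^{j+1}$ be a formal power series with $a_0=1$, let $(b_n)_{n\ge1}$ be real numbers, $\mathbf b=(b_1,b_2,\dots)$, and $G(t)=\sum_{n\ge1}b_n\frac{t^n}{n!}$. Define $$Q(t)=\tfrac12\frac{d}{dt}\bigl(F(t)^2\bigr),\qquad P(t)=\int_0^t\bigl(F'(u)\bigr)^2\,du .$$ Then: (i) the recurrence $$0=\sum_{k=1}^{n}B_{n,k}(\mathbf b)\,\frac{(k-1)!}{2}\sum_{j=0}^{k-1}a_ja_{k-1-j}\bigl[2n(j+1)(k-j)-k(k+1)\bigr]\quad\text{for all }n\ge1$$ holds if and only if $t\,\frac{d}{dt}P(G(t))-Q(G(t))=0$; and (ii) the recurrence $$0=\sum_{k=1}^{n}\sum_{j=0}^{k-1}a_ja_{k-1-j}(j+1)(k-j)\frac{(k-1)!}{2k}\sum_{s=1}^{n}\frac{b_s}{s!(n-s)!}B_{n-s,k-1}(\mathbf b)\bigl(ks(s-1)+n(n-1)\bigr)\quad\text{for all }n\ge1$$ holds if and only if $\frac{d^2}{dt^2}P(G(t))+G''(t)\,P'(G(t))=0$.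
   Context: $B_{n,k}(x_1,x_2,\dots)$ denotes the partial Bell polynomial: the sum over set partitions $\{P_1,\dots,P_k\}$ of $\{1,\dots,n\}$ into $k$ nonempty blocks of $x_{|P_1|}\cdots x_{|P_k|}$ (with $B_{0,0}=1$, $B_{n,0}=0$ for $n>0$). All series are formal power series; $P'$ denotes the derivative of $P$ as a series in its argument. (Context: $F$ is a point field diffeomorphism applied to a free scalar field, and $b_n$ is the sum of on-shell tree-level amplitudes of rooted trees with $n$ on-shell legs and one off-shell propagator leg; the two recurrences are the $m^2$-part and dot-product part of the tree-level recursion.) *)

theory Defs
  imports "HOL-Computational_Algebra.Formal_Power_Series" "HOL-Library.Disjoint_Sets"
begin

definition bell_poly :: "nat \<Rightarrow> nat \<Rightarrow> (nat \<Rightarrow> real) \<Rightarrow> real" where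
  "bell_poly n k x =
     (\<Sum>P\<in>{P. partition_on {1..n} P \<and> card P = k}. \<Prod>B\<in>P. x (card B))"

end

theory Submission
  imports Defs
begin


definition bS :: "'a set \<Rightarrow> nat \<Rightarrow> (nat \<Rightarrow> real) \<Rightarrow> real" where
  "bS A k x = (\<Sum>P\<in>{P. partition_on A P \<and> card P = k}. \<Prod>B\<in>P. x (card B))"

definition parts :: "'a set \<Rightarrow> nat \<Rightarrow> 'a set set set" where
  "parts A k = {P. partition_on A P \<and> card P = k}"

lemma finite_parts: "finite A \<Longrightarrow> finite (parts A k)"
  unfolding parts_def using finitely_many_partition_on[of A] by (rule finite_subset[rotated]) auto

lemma bS_0: "finite A \<Longrightarrow> bS A 0 x = (if A = {} then 1 else 0)"
proof -
  assume fA: "finite A"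
  have "{P. partition_on A P \<and> card P = 0} = (if A = {} then {{}} else {})"
    using finite_elements[OF fA] by (auto simp: partition_on_def)
  then show ?thesis by (simp add: bS_def)
qed

lemma bS_empty_Suc: "bS {} (Suc k) x = 0"
  by (simp add: bS_def partition_on_empty)

lemma bS_insert:
  assumes fA: "finite A" and aA: "a \<notin> A"
  shows "bS (insert a A) (Suc k) x = (\<Sum>S\<in>Pow A. x (Suc (card S)) * bS (A - S) k x)"
proof -
  define h where "h = (\<lambda>(S, P'). insert (insert a S) (P' :: 'a set set))"
  have mem: "h (S, P') \<in> parts (insert a A) (Suc k) \<and> insert a S \<notin> P'"
    if S: "S \<subseteq> A" and P': "P' \<in> parts (A - S) k" for S P'
  proof -
    have pp: "partition_on (A - S) P'" and cP: "card P' = k" using P' by (auto simp: parts_def)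
    have fP: "finite P'" using finite_elements[OF _ pp] fA by auto
    have U: "\<Union>P' = A - S" using pp by (auto simp: partition_on_def)
    have dj: "disjnt (insert a S) (\<Union>P')" using U aA by (auto simp: disjnt_def)
    have nin: "insert a S \<notin> P'" using U aA by blast
    have e: "insert a A - insert a S = A - S" using aA by auto
    have "partition_on (insert a A) (insert (insert a S) P')"
      using partition_on_insert[OF dj, of "insert a A"] e pp S by auto
    moreover have "card (insert (insert a S) P') = Suc k" using fP nin cP by simp
    ultimately show ?thesis using nin by (simp add: h_def parts_def)
  qed
  have inj: "inj_on h (Sigma (Pow A) (\<lambda>S. parts (A - S) k))"
  proof (rule inj_onI, clarsimp)
    fix S1 P1 S2 P2
    assume S1: "S1 \<subseteq> A" and P1: "P1 \<in> parts (A - S1) k" and S2: "S2 \<subseteq> A" and P2: "P2 \<in> parts (A - S2) k"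
      and eq: "h (S1, P1) = h (S2, P2)"
    have U1: "\<Union>P1 = A - S1" using P1 by (auto simp: parts_def partition_on_def)
    have U2: "\<Union>P2 = A - S2" using P2 by (auto simp: parts_def partition_on_def)
    have "insert a S1 \<in> insert (insert a S2) P2" using eq by (auto simp: h_def)
    moreover have "insert a S1 \<notin> P2" using U2 aA by auto
    ultimately have "insert a S1 = insert a S2" by auto
    then have s: "S1 = S2" using S1 S2 aA by (metis insert_ident subset_iff)
    have n1: "insert a S1 \<notin> P1" using U1 aA by auto
    have n2: "insert a S1 \<notin> P2" using U2 aA by auto
    have "P1 = insert (insert a S1) P1 - {insert a S1}" using n1 by auto
    also have "\<dots> = insert (insert a S1) P2 - {insert a S1}" using eq s by (simp add: h_def)
    also have "\<dots> = P2" using n2 by auto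
    finally show "S1 = S2 \<and> P1 = P2" using s by simp
  qed
  have img: "h ` (Sigma (Pow A) (\<lambda>S. parts (A - S) k)) = parts (insert a A) (Suc k)"
  proof
    show "h ` (Sigma (Pow A) (\<lambda>S. parts (A - S) k)) \<subseteq> parts (insert a A) (Suc k)"
      using mem by auto
  next
    show "parts (insert a A) (Suc k) \<subseteq> h ` (Sigma (Pow A) (\<lambda>S. parts (A - S) k))"
    proof
      fix P assume P: "P \<in> parts (insert a A) (Suc k)"
      have pp: "partition_on (insert a A) P" and cP: "card P = Suc k" using P by (auto simp: parts_def)
      have fP: "finite P" using finite_elements[OF _ pp] fA by auto
      obtain B where B: "B \<in> P" "a \<in> B" using pp by (auto simp: partition_on_def)
      have Bsub: "B \<subseteq> insert a A" using pp B by (auto simp: partition_on_def)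
      have PB: "P = insert B (P - {B})" using B by auto
      have dj: "disjnt B (\<Union>(P - {B}))"
        using pp B unfolding partition_on_def disjoint_def disjnt_def by blast
      have "partition_on (insert a A - B) (P - {B})"
        using partition_on_insert[OF dj, of "insert a A"] pp PB by simp
      moreover have "insert a A - B = A - (B - {a})" using aA B by auto
      ultimately have p2: "partition_on (A - (B - {a})) (P - {B})" by simp
      have c2: "card (P - {B}) = k" using cP fP B by simp
      have "h (B - {a}, P - {B}) = P" using B PB by (auto simp: h_def insert_absorb)
      moreover have "(B - {a}, P - {B}) \<in> Sigma (Pow A) (\<lambda>S. parts (A - S) k)"
        using Bsub p2 c2 by (auto simp: parts_def)
      ultimately show "P \<in> h ` (Sigma (Pow A) (\<lambda>S. parts (A - S) k))" by force
    qed
  qed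
  have bij: "bij_betw h (Sigma (Pow A) (\<lambda>S. parts (A - S) k)) (parts (insert a A) (Suc k))"
    using inj img by (simp add: bij_betw_def)
  have "bS (insert a A) (Suc k) x = (\<Sum>P\<in>parts (insert a A) (Suc k). \<Prod>B\<in>P. x (card B))"
    by (simp add: bS_def parts_def)
  also have "\<dots> = (\<Sum>SP\<in>Sigma (Pow A) (\<lambda>S. parts (A - S) k). \<Prod>B\<in>h SP. x (card B))"
    using sum.reindex_bij_betw[OF bij, of "\<lambda>P. \<Prod>B\<in>P. x (card B)"] by simp
  also have "\<dots> = (\<Sum>SP\<in>Sigma (Pow A) (\<lambda>S. parts (A - S) k). x (Suc (card (fst SP))) * (\<Prod>B\<in>snd SP. x (card B)))"
  proof (rule sum.cong[OF refl], clarsimp)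
    fix S P' assume S: "S \<subseteq> A" and P': "P' \<in> parts (A - S) k"
    have pp: "partition_on (A - S) P'" using P' by (auto simp: parts_def)
    have fP: "finite P'" using finite_elements[OF _ pp] fA by auto
    have nin: "insert a S \<notin> P'" using mem[OF S P'] by simp
    have fS: "finite S" using S fA finite_subset by auto
    have "aS": "a \<notin> S" using S aA by auto
    show "(\<Prod>B\<in>h (S, P'). x (card B)) = x (Suc (card S)) * (\<Prod>B\<in>P'. x (card B))"
      using fP nin fS aS by (simp add: h_def)
  qed
  also have "\<dots> = (\<Sum>S\<in>Pow A. \<Sum>P'\<in>parts (A - S) k. x (Suc (card S)) * (\<Prod>B\<in>P'. x (card B)))"
    by (subst sum.Sigma) (auto simp: split_def fA finite_parts)
  also have "\<dots> = (\<Sum>S\<in>Pow A. x (Suc (card S)) * bS (A - S) k x)"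
    by (simp add: bS_def parts_def sum_distrib_left)
  finally show ?thesis .
qed

lemma sum_Pow_card:
  fixes g :: "nat \<Rightarrow> real"
  assumes fA: "finite A"
  shows "(\<Sum>S\<in>Pow A. g (card S)) = (\<Sum>i=0..card A. of_nat (card A choose i) * g i)"
proof -
  have "(\<Sum>S\<in>Pow A. g (card S)) = (\<Sum>i\<in>{0..card A}. \<Sum>S\<in>{S. S \<in> Pow A \<and> card S = i}. g (card S))"
    by (rule sum.group[symmetric]) (use fA card_mono in auto)
  also have "\<dots> = (\<Sum>i=0..card A. of_nat (card A choose i) * g i)"
  proof (rule sum.cong[OF refl])
    fix i
    have "(\<Sum>S\<in>{S. S \<in> Pow A \<and> card S = i}. g (card S)) = (\<Sum>S\<in>{S. S \<subseteq> A \<and> card S = i}. g i)"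
      by (rule sum.cong) auto
    also have "\<dots> = of_nat (card A choose i) * g i" using n_subsets[OF fA, of i] by simp
    finally show "(\<Sum>S\<in>{S. S \<in> Pow A \<and> card S = i}. g (card S)) = of_nat (card A choose i) * g i" .
  qed
  finally show ?thesis .
qed

lemma Gpow_rec:
  fixes G :: "real fps"
  assumes G_def: "G = Abs_fps (\<lambda>n. if n = 0 then 0 else b n / fact n)"
  shows "fact (Suc n) * fps_nth (G ^ Suc j) (Suc n) = real (Suc j) * (\<Sum>i=0..n. fact n / fact i * b (Suc i) * fps_nth (G ^ j) (n - i))"
proof -
  have "fps_deriv (G ^ Suc j) = fps_const (of_nat (Suc j)) * (fps_deriv G * G ^ j)"
    using fps_deriv_power[of G "Suc j"] by (simp del: power_Suc add: mult.assoc)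
  then have "fps_nth (fps_deriv (G ^ Suc j)) n = real (Suc j) * fps_nth (fps_deriv G * G ^ j) n"
    by (simp del: power_Suc)
  moreover have "fps_nth (fps_deriv (G ^ Suc j)) n = real (Suc n) * fps_nth (G ^ Suc j) (Suc n)"
    by (simp only: fps_deriv_nth) (simp del: power_Suc)
  ultimately have e: "real (Suc n) * fps_nth (G ^ Suc j) (Suc n) = real (Suc j) * (\<Sum>i=0..n. fps_nth (fps_deriv G) i * fps_nth (G ^ j) (n - i))"
    by (simp only: fps_mult_nth)
  have d: "fps_nth (fps_deriv G) i = b (Suc i) / fact i" for i
    by (simp add: G_def field_simps del: of_nat_Suc)
  have "fact (Suc n) * fps_nth (G ^ Suc j) (Suc n) = fact n * (real (Suc n) * fps_nth (G ^ Suc j) (Suc n))"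
    by (simp add: algebra_simps)
  also have "\<dots> = real (Suc j) * (\<Sum>i=0..n. fact n * (b (Suc i) / fact i) * fps_nth (G ^ j) (n - i))"
    unfolding e d by (simp add: sum_distrib_left algebra_simps)
  finally show ?thesis by (simp add: algebra_simps)
qed

lemma Gpow_bS_aux:
  fixes G :: "real fps"
  assumes G_def: "G = Abs_fps (\<lambda>n. if n = 0 then 0 else b n / fact n)"
  shows "finite A \<Longrightarrow> card A = m \<Longrightarrow> fact (card A) * fps_nth (G ^ k) (card A) = fact k * bS A k b"
proof (induction m arbitrary: A k rule: less_induct)
  case (less m)
  have G0: "fps_nth G 0 = 0" by (simp add: G_def)
  show ?case
  proof (cases "A = {}")
    case True
    show ?thesis
    proof (cases k)
      case 0 then show ?thesis using True by (simp add: bS_0)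
    next
      case (Suc j) then show ?thesis using G0 True by (simp add: bS_empty_Suc)
    qed
  next
    case False
    then obtain a where aA: "a \<in> A" by auto
    define A' where "A' = A - {a}"
    have fA': "finite A'" using less.prems by (simp add: A'_def)
    have aA': "a \<notin> A'" by (simp add: A'_def)
    have AA: "A = insert a A'" using aA by (auto simp: A'_def)
    define n where "n = card A'"
    have cn: "card A = Suc n" using fA' aA' AA by (simp add: n_def)
    show ?thesis
    proof (cases k)
      case 0 then show ?thesis using less.prems cn False by (simp add: bS_0)
    next
      case (Suc j)
      have "fact k * bS A k b = real (Suc j) * (\<Sum>S\<in>Pow A'. b (Suc (card S)) * (fact j * bS (A' - S) j b))"
        unfolding Suc AA bS_insert[OF fA' aA'] by (simp add: sum_distrib_left algebra_simps)
      also have "\<dots> = real (Suc j) * (\<Sum>S\<in>Pow A'. b (Suc (card S)) * (fact (n - card S) * fps_nth (G ^ j) (n - card S)))"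
      proof -
        have "fact j * bS (A' - S) j b = fact (n - card S) * fps_nth (G ^ j) (n - card S)" if "S \<in> Pow A'" for S
        proof -
          have c: "card (A' - S) = n - card S" using that fA' by (simp add: n_def card_Diff_subset finite_subset)
          have "n - card S < m" using cn less.prems by simp
          then show ?thesis using less.IH[of "n - card S" "A' - S" j] fA' c by simp
        qed
        then have "(\<Sum>S\<in>Pow A'. b (Suc (card S)) * (fact j * bS (A' - S) j b)) = (\<Sum>S\<in>Pow A'. b (Suc (card S)) * (fact (n - card S) * fps_nth (G ^ j) (n - card S)))"
          by (intro sum.cong refl) simp
        then show ?thesis by simp
      qed
      also have "\<dots> = real (Suc j) * (\<Sum>i=0..n. of_nat (n choose i) * (b (Suc i) * (fact (n - i) * fps_nth (G ^ j) (n - i))))"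
        using sum_Pow_card[OF fA', of "\<lambda>i. b (Suc i) * (fact (n - i) * fps_nth (G ^ j) (n - i))"]
        by (simp add: n_def)
      also have "\<dots> = real (Suc j) * (\<Sum>i=0..n. fact n / fact i * b (Suc i) * fps_nth (G ^ j) (n - i))"
      proof -
        have "of_nat (n choose i) * (b (Suc i) * (fact (n - i) * fps_nth (G ^ j) (n - i))) = fact n / fact i * b (Suc i) * fps_nth (G ^ j) (n - i)"
          if "i \<in> {0..n}" for i
          using that by (simp add: binomial_fact field_simps)
        then show ?thesis by (metis (no_types, lifting) sum.cong)
      qed
      also have "\<dots> = fact (Suc n) * fps_nth (G ^ Suc j) (Suc n)" using Gpow_rec[OF G_def] by simp
      finally show ?thesis using cn Suc by simp
    qed
  qed
qed

lemma Gpow_bS: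
  fixes G :: "real fps"
  assumes G_def: "G = Abs_fps (\<lambda>n. if n = 0 then 0 else b n / fact n)"
    and fA: "finite A"
  shows "fact (card A) * fps_nth (G ^ k) (card A) = fact k * bS A k b"
  using Gpow_bS_aux[OF G_def fA refl] .

lemma Gpow_bell:
  fixes G :: "real fps"
  assumes G_def: "G = Abs_fps (\<lambda>n. if n = 0 then 0 else b n / fact n)"
  shows "bell_poly n k b = fact n * fps_nth (G ^ k) n / fact k"
  using Gpow_bS[OF G_def, of "{1..n}" k] by (simp add: bell_poly_def bS_def field_simps)



lemma compose_mult_nth:
  fixes H A G :: "real fps"
  assumes G0: "fps_nth G 0 = 0"
  shows "fps_nth (H * (A oo G)) n = (\<Sum>k=0..n. fps_nth A k * fps_nth (H * G ^ k) n)"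
proof -
  have "fps_nth (H * (A oo G)) n = (\<Sum>i=0..n. fps_nth H i * (\<Sum>k=0..n - i. fps_nth A k * fps_nth (G ^ k) (n - i)))"
    by (simp add: fps_mult_nth fps_compose_nth)
  also have "\<dots> = (\<Sum>i=0..n. fps_nth H i * (\<Sum>k=0..n. fps_nth A k * fps_nth (G ^ k) (n - i)))"
  proof (rule sum.cong[OF refl])
    fix i assume i: "i \<in> {0..n}"
    have "(\<Sum>k=0..n - i. fps_nth A k * fps_nth (G ^ k) (n - i)) = (\<Sum>k=0..n. fps_nth A k * fps_nth (G ^ k) (n - i))"
      by (rule sum.mono_neutral_left) (use startsby_zero_power_prefix[OF G0] in auto)
    then show "fps_nth H i * (\<Sum>k=0..n - i. fps_nth A k * fps_nth (G ^ k) (n - i)) = fps_nth H i * (\<Sum>k=0..n. fps_nth A k * fps_nth (G ^ k) (n - i))"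
      by simp
  qed
  also have "\<dots> = (\<Sum>k=0..n. fps_nth A k * (\<Sum>i=0..n. fps_nth H i * fps_nth (G ^ k) (n - i)))"
    by (simp add: sum_distrib_left algebra_simps) (rule sum.swap)
  also have "\<dots> = (\<Sum>k=0..n. fps_nth A k * fps_nth (H * G ^ k) n)"
    by (simp add: fps_mult_nth)
  finally show ?thesis .
qed

lemma mult_pow_same_nth:
  fixes H G :: "real fps"
  assumes G0: "fps_nth G 0 = 0" and H0: "fps_nth H 0 = 0"
  shows "fps_nth (H * G ^ n) n = 0"
proof -
  have "fps_nth H i * fps_nth (G ^ n) (n - i) = 0" if "i \<in> {0..n}" for i
  proof (cases "i = 0")
    case True then show ?thesis using H0 by simp
  next
    case False
    then have "n - i < n" using that by auto
    then show ?thesis using startsby_zero_power_prefix[OF G0, rule_format, of "n - i" n] by simp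
  qed
  then have "(\<Sum>i=0..n. fps_nth H i * fps_nth (G ^ n) (n - i)) = 0" by (intro sum.neutral) blast
  then show ?thesis by (simp add: fps_mult_nth)
qed

lemma P_nth:
  fixes F P :: "real fps"
  assumes F_def: "F = Abs_fps (\<lambda>n. if n = 0 then 0 else a (n - 1))"
    and P_def: "P = fps_integral0 ((fps_deriv F) ^ 2)"
  shows "fps_nth P 0 = 0"
    and "fps_nth P (Suc m) = (\<Sum>j=0..m. a j * a (m - j) * real (j + 1) * real (Suc m - j)) / real (Suc m)"
proof -
  show "fps_nth P 0 = 0" by (simp add: P_def)
  have d: "fps_nth (fps_deriv F) i = real (i + 1) * a i" for i by (simp add: F_def)
  have "fps_nth P (Suc m) = inverse (real (Suc m)) * (\<Sum>j=0..m. real (j + 1) * a j * (real (m - j + 1) * a (m - j)))"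
    by (simp add: P_def power2_eq_square fps_mult_nth F_def del: of_nat_Suc)
  also have "\<dots> = (\<Sum>j=0..m. a j * a (m - j) * real (j + 1) * real (Suc m - j)) / real (Suc m)"
    by (simp add: field_simps sum_divide_distrib Suc_diff_le)
  finally show "fps_nth P (Suc m) = (\<Sum>j=0..m. a j * a (m - j) * real (j + 1) * real (Suc m - j)) / real (Suc m)" .
qed

lemma Q_nth:
  fixes F Q :: "real fps"
  assumes F_def: "F = Abs_fps (\<lambda>n. if n = 0 then 0 else a (n - 1))"
    and Q_def: "Q = fps_const (1/2) * fps_deriv (F ^ 2)"
  shows "fps_nth Q 0 = 0"
    and "fps_nth Q (Suc m) = real (Suc m + 1) / 2 * (\<Sum>j=0..m. a j * a (m - j))"
proof -
  show "fps_nth Q 0 = 0" by (simp add: Q_def F_def power2_eq_square fps_mult_nth)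
  have "fps_nth (F * F) (Suc (Suc m)) = (\<Sum>i=0..Suc (Suc m). fps_nth F i * fps_nth F (Suc (Suc m) - i))"
    by (simp add: fps_mult_nth)
  also have "\<dots> = (\<Sum>i=0..Suc m. fps_nth F (Suc i) * fps_nth F (Suc (Suc m) - Suc i))"
    by (subst sum.atLeast0_atMost_Suc_shift) (simp add: F_def)
  also have "\<dots> = (\<Sum>i=0..m. fps_nth F (Suc i) * fps_nth F (Suc (Suc m) - Suc i))"
    by (subst sum.atLeast0_atMost_Suc) (simp add: F_def)
  also have "\<dots> = (\<Sum>j=0..m. a j * a (m - j))"
    by (rule sum.cong) (auto simp: F_def Suc_diff_le)
  finally have e: "fps_nth (F * F) (Suc (Suc m)) = (\<Sum>j=0..m. a j * a (m - j))" .
  show "fps_nth Q (Suc m) = real (Suc m + 1) / 2 * (\<Sum>j=0..m. a j * a (m - j))"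
    unfolding Q_def power2_eq_square fps_mult_left_const_nth fps_deriv_nth using e by simp
qed

lemma part1_coeff:
  fixes a b :: "nat \<Rightarrow> real" and F G P Q :: "real fps"
  assumes F_def: "F = Abs_fps (\<lambda>n. if n = 0 then 0 else a (n - 1))"
    and G_def: "G = Abs_fps (\<lambda>n. if n = 0 then 0 else b n / fact n)"
    and Q_def: "Q = fps_const (1/2) * fps_deriv (F ^ 2)"
    and P_def: "P = fps_integral0 ((fps_deriv F) ^ 2)"
    and n: "n \<ge> 1"
  shows "(\<Sum>k=1..n. bell_poly n k b * (fact (k - 1) / 2) *
              (\<Sum>j=0..k-1. a j * a (k - 1 - j) *
                 (2 * real n * real (j + 1) * real (k - j) - real k * real (k + 1))))
         = fact n * fps_nth (fps_X * fps_deriv (P oo G) - (Q oo G)) n"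
proof -
  have trm: "bell_poly n k b * (fact (k - 1) / 2) *
              (\<Sum>j=0..k-1. a j * a (k - 1 - j) *
                 (2 * real n * real (j + 1) * real (k - j) - real k * real (k + 1)))
        = fact n * ((real n * fps_nth P k - fps_nth Q k) * fps_nth (G ^ k) n)" if k: "k \<in> {1..n}" for k
  proof -
    obtain i where ki: "k = Suc i" using k by (cases k) auto
    define D where "D = (\<Sum>j=0..i. a j * a (i - j) * real (j + 1) * real (Suc i - j))"
    define C where "C = (\<Sum>j=0..i. a j * a (i - j))"
    have S: "(\<Sum>j=0..k-1. a j * a (k - 1 - j) *
                 (2 * real n * real (j + 1) * real (k - j) - real k * real (k + 1)))
           = 2 * real n * D - real (Suc i) * real (Suc i + 1) * C"
      unfolding ki D_def C_def
      by (simp add: right_diff_distrib sum_subtractf sum_distrib_left sum.distrib algebra_simps del: of_nat_Suc)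
    have PQ: "fps_nth P k = D / real (Suc i)" "fps_nth Q k = real (Suc i + 1) / 2 * C"
      using P_nth(2)[OF F_def P_def, of i] Q_nth(2)[OF F_def Q_def, of i] by (simp_all add: ki D_def C_def)
    show ?thesis unfolding S PQ Gpow_bell[OF G_def] unfolding ki by (simp add: field_simps del: of_nat_Suc)
  qed
  have "(\<Sum>k=1..n. bell_poly n k b * (fact (k - 1) / 2) *
              (\<Sum>j=0..k-1. a j * a (k - 1 - j) *
                 (2 * real n * real (j + 1) * real (k - j) - real k * real (k + 1))))
        = (\<Sum>k=1..n. fact n * ((real n * fps_nth P k - fps_nth Q k) * fps_nth (G ^ k) n))"
    by (rule sum.cong[OF refl]) (rule trm)
  also have "\<dots> = fact n * (\<Sum>k=0..n. (real n * fps_nth P k - fps_nth Q k) * fps_nth (G ^ k) n)"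
    using sum.atLeast_Suc_atMost[of 0 n "\<lambda>k. (real n * fps_nth P k - fps_nth Q k) * fps_nth (G ^ k) n"]
    by (simp add: sum_distrib_left P_nth(1)[OF F_def P_def] Q_nth(1)[OF F_def Q_def])
  also have "\<dots> = fact n * fps_nth (fps_X * fps_deriv (P oo G) - (Q oo G)) n"
  proof -
    obtain m where m: "n = Suc m" using n by (cases n) auto
    show ?thesis
      by (simp add: m fps_compose_nth sum_subtractf sum_distrib_left algebra_simps del: of_nat_Suc)
  qed
  finally show ?thesis .
qed

lemma part2_coeff:
  fixes a b :: "nat \<Rightarrow> real" and F G P :: "real fps"
  assumes F_def: "F = Abs_fps (\<lambda>n. if n = 0 then 0 else a (n - 1))"
    and G_def: "G = Abs_fps (\<lambda>n. if n = 0 then 0 else b n / fact n)"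
    and P_def: "P = fps_integral0 ((fps_deriv F) ^ 2)"
    and n: "n \<ge> 1"
  shows "(\<Sum>k=1..n. \<Sum>j=0..k-1. a j * a (k - 1 - j) * real (j + 1) * real (k - j) *
              (fact (k - 1) / (2 * real k)) *
              (\<Sum>s=1..n. b s / (fact s * fact (n - s)) * bell_poly (n - s) (k - 1) b *
                 (real k * real s * (real s - 1) + real n * (real n - 1))))
         = fps_nth (fps_X ^ 2 * fps_deriv (fps_deriv G) * (fps_deriv P oo G)) n / 2
           + real n * (real n - 1) / 2 * fps_nth (P oo G) n"
proof -
  define H where "H = fps_X ^ 2 * fps_deriv (fps_deriv G)"
  have G0: "fps_nth G 0 = 0" by (simp add: G_def)
  have Hn: "fps_nth H s = real s * (real s - 1) * fps_nth G s" for s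
  proof (cases "s < 2")
    case True then show ?thesis by (cases s) (auto simp: H_def fps_X_power_mult_nth G0)
  next
    case False
    then obtain t where t: "s = Suc (Suc t)" by (metis add_2_eq_Suc le_add_diff_inverse not_less)
    have "fps_nth H s = fps_nth (fps_deriv (fps_deriv G)) t" unfolding H_def fps_X_power_mult_nth t by simp
    then show ?thesis by (simp add: t algebra_simps)
  qed
  have H0: "fps_nth H 0 = 0" by (simp add: Hn)
  have dP: "fps_nth (fps_deriv P) i = (\<Sum>j=0..i. a j * a (i - j) * real (j + 1) * real (Suc i - j))" for i
    using P_nth(2)[OF F_def P_def, of i] by simp
  have trm: "(\<Sum>j=0..k-1. a j * a (k - 1 - j) * real (j + 1) * real (k - j) *
              (fact (k - 1) / (2 * real k)) *
              (\<Sum>s=1..n. b s / (fact s * fact (n - s)) * bell_poly (n - s) (k - 1) b *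
                 (real k * real s * (real s - 1) + real n * (real n - 1))))
        = fps_nth (fps_deriv P) (k - 1) * fps_nth (H * G ^ (k - 1)) n / 2
          + real n * (real n - 1) / 2 * (fps_nth P k * fps_nth (G ^ k) n)" if k: "k \<in> {1..n}" for k
  proof -
    obtain i where ki: "k = Suc i" using k by (cases k) auto
    define D where "D = (\<Sum>j=0..i. a j * a (i - j) * real (j + 1) * real (Suc i - j))"
    define T where "T = (\<Sum>s=1..n. b s / (fact s * fact (n - s)) * bell_poly (n - s) (k - 1) b *
                 (real k * real s * (real s - 1) + real n * (real n - 1)))"
    have L: "(\<Sum>j=0..k-1. a j * a (k - 1 - j) * real (j + 1) * real (k - j) *
              (fact (k - 1) / (2 * real k)) * T) = D * (fact (k - 1) / (2 * real k)) * T"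
      unfolding D_def ki by (simp add: sum_distrib_right sum_divide_distrib)
    have T1: "fact (k - 1) * T = (\<Sum>s=1..n. fps_nth G s * fps_nth (G ^ i) (n - s) *
                 (real k * real s * (real s - 1) + real n * (real n - 1)))"
      unfolding T_def sum_distrib_left
    proof (rule sum.cong[OF refl])
      fix s assume s: "s \<in> {1..n}"
      have "fact (k - 1) * (b s / (fact s * fact (n - s)) * bell_poly (n - s) (k - 1) b) = fps_nth G s * fps_nth (G ^ i) (n - s)"
        using s by (simp add: ki Gpow_bell[OF G_def] G_def)
      then show "fact (k - 1) * (b s / (fact s * fact (n - s)) * bell_poly (n - s) (k - 1) b *
                 (real k * real s * (real s - 1) + real n * (real n - 1))) = fps_nth G s * fps_nth (G ^ i) (n - s) *
                 (real k * real s * (real s - 1) + real n * (real n - 1))"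
        by (metis mult.assoc)
    qed
    also have "\<dots> = real k * (\<Sum>s=1..n. fps_nth H s * fps_nth (G ^ i) (n - s)) + real n * (real n - 1) * (\<Sum>s=1..n. fps_nth G s * fps_nth (G ^ i) (n - s))"
      unfolding sum_distrib_left sum.distrib[symmetric] by (rule sum.cong[OF refl]) (simp add: Hn algebra_simps)
    also have "\<dots> = real k * fps_nth (H * G ^ i) n + real n * (real n - 1) * fps_nth (G ^ k) n"
    proof -
      have "(\<Sum>s=0..n. fps_nth H s * fps_nth (G ^ i) (n - s)) = (\<Sum>s=1..n. fps_nth H s * fps_nth (G ^ i) (n - s))"
        using sum.atLeast_Suc_atMost[of 0 n "\<lambda>s. fps_nth H s * fps_nth (G ^ i) (n - s)"] H0 by simp
      moreover have "(\<Sum>s=0..n. fps_nth G s * fps_nth (G ^ i) (n - s)) = (\<Sum>s=1..n. fps_nth G s * fps_nth (G ^ i) (n - s))"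
        using sum.atLeast_Suc_atMost[of 0 n "\<lambda>s. fps_nth G s * fps_nth (G ^ i) (n - s)"] G0 by simp
      ultimately show ?thesis by (simp add: ki fps_mult_nth)
    qed
    finally have T2: "fact (k - 1) * T = real k * fps_nth (H * G ^ i) n + real n * (real n - 1) * fps_nth (G ^ k) n" .
    have PD: "fps_nth (fps_deriv P) (k - 1) = D" "fps_nth P k = D / real k"
      using dP[of i] P_nth(2)[OF F_def P_def, of i] by (simp_all add: ki D_def)
    have "D * (fact (k - 1) / (2 * real k)) * T = D / (2 * real k) * (fact (k - 1) * T)" by simp
    also have "\<dots> = D * fps_nth (H * G ^ i) n / 2 + real n * (real n - 1) / 2 * (D / real k * fps_nth (G ^ k) n)"
      unfolding T2 by (simp add: ki field_simps del: of_nat_Suc)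
    finally show ?thesis unfolding T_def[symmetric] L PD by (simp add: ki)
  qed
  have "(\<Sum>k=1..n. \<Sum>j=0..k-1. a j * a (k - 1 - j) * real (j + 1) * real (k - j) *
              (fact (k - 1) / (2 * real k)) *
              (\<Sum>s=1..n. b s / (fact s * fact (n - s)) * bell_poly (n - s) (k - 1) b *
                 (real k * real s * (real s - 1) + real n * (real n - 1))))
      = (\<Sum>k=1..n. fps_nth (fps_deriv P) (k - 1) * fps_nth (H * G ^ (k - 1)) n / 2
          + real n * (real n - 1) / 2 * (fps_nth P k * fps_nth (G ^ k) n))"
    by (rule sum.cong[OF refl]) (rule trm)
  also have "\<dots> = (\<Sum>k=1..n. fps_nth (fps_deriv P) (k - 1) * fps_nth (H * G ^ (k - 1)) n) / 2
          + real n * (real n - 1) / 2 * (\<Sum>k=1..n. fps_nth P k * fps_nth (G ^ k) n)"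
    by (simp add: sum.distrib sum_divide_distrib sum_distrib_left)
  also have "(\<Sum>k=1..n. fps_nth P k * fps_nth (G ^ k) n) = fps_nth (P oo G) n"
    using sum.atLeast_Suc_atMost[of 0 n "\<lambda>k. fps_nth P k * fps_nth (G ^ k) n"]
    by (simp add: fps_compose_nth P_nth(1)[OF F_def P_def])
  also have "(\<Sum>k=1..n. fps_nth (fps_deriv P) (k - 1) * fps_nth (H * G ^ (k - 1)) n) = fps_nth (H * (fps_deriv P oo G)) n"
  proof -
    obtain m where m: "n = Suc m" using n by (cases n) auto
    have "(\<Sum>k=1..n. fps_nth (fps_deriv P) (k - 1) * fps_nth (H * G ^ (k - 1)) n)
        = (\<Sum>k=0..m. fps_nth (fps_deriv P) k * fps_nth (H * G ^ k) n)"
      unfolding m using sum.shift_bounds_cl_Suc_ivl[of "\<lambda>k. fps_nth (fps_deriv P) (k - 1) * fps_nth (H * G ^ (k - 1)) (Suc m)" 0 m]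
      by simp
    also have "\<dots> = (\<Sum>k=0..n. fps_nth (fps_deriv P) k * fps_nth (H * G ^ k) n)"
      using mult_pow_same_nth[OF G0 H0, of n] by (simp add: m)
    also have "\<dots> = fps_nth (H * (fps_deriv P oo G)) n"
      by (rule compose_mult_nth[OF G0, symmetric])
    finally show ?thesis .
  qed
  finally show ?thesis by (simp add: H_def)
qed


theorem proposition5p5p2:
  fixes a b :: "nat \<Rightarrow> real" and F G P Q :: "real fps"
  assumes a0: "a 0 = 1"
    and F_def: "F = Abs_fps (\<lambda>n. if n = 0 then 0 else a (n - 1))"
    and G_def: "G = Abs_fps (\<lambda>n. if n = 0 then 0 else b n / fact n)"
    and Q_def: "Q = fps_const (1/2) * fps_deriv (F ^ 2)"
    and P_def: "P = fps_integral0 ((fps_deriv F) ^ 2)"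
  shows "((\<forall>n\<ge>1. 0 = (\<Sum>k=1..n. bell_poly n k b * (fact (k - 1) / 2) *
              (\<Sum>j=0..k-1. a j * a (k - 1 - j) *
                 (2 * real n * real (j + 1) * real (k - j) - real k * real (k + 1)))))
          \<longleftrightarrow> fps_X * fps_deriv (P oo G) - (Q oo G) = 0)
       \<and> ((\<forall>n\<ge>1. 0 = (\<Sum>k=1..n. \<Sum>j=0..k-1. a j * a (k - 1 - j) * real (j + 1) * real (k - j) *
              (fact (k - 1) / (2 * real k)) *
              (\<Sum>s=1..n. b s / (fact s * fact (n - s)) * bell_poly (n - s) (k - 1) b *
                 (real k * real s * (real s - 1) + real n * (real n - 1)))))
          \<longleftrightarrow> fps_deriv (fps_deriv (P oo G)) + fps_deriv (fps_deriv G) * (fps_deriv P oo G) = 0)"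
proof -
  have G0: "fps_nth G 0 = 0" by (simp add: G_def)
  define E1 where "E1 = fps_X * fps_deriv (P oo G) - (Q oo G)"
  define E2 where "E2 = fps_deriv (fps_deriv (P oo G)) + fps_deriv (fps_deriv G) * (fps_deriv P oo G)"
  have E10: "fps_nth E1 0 = 0" by (simp add: E1_def Q_nth(1)[OF F_def Q_def])
  have i: "(\<forall>n\<ge>1. 0 = (\<Sum>k=1..n. bell_poly n k b * (fact (k - 1) / 2) *
              (\<Sum>j=0..k-1. a j * a (k - 1 - j) *
                 (2 * real n * real (j + 1) * real (k - j) - real k * real (k + 1)))))
          \<longleftrightarrow> E1 = 0"
  proof -
    have "(\<forall>n\<ge>1. 0 = (\<Sum>k=1..n. bell_poly n k b * (fact (k - 1) / 2) *
              (\<Sum>j=0..k-1. a j * a (k - 1 - j) *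
                 (2 * real n * real (j + 1) * real (k - j) - real k * real (k + 1)))))
        \<longleftrightarrow> (\<forall>n\<ge>1. fps_nth E1 n = 0)"
      using part1_coeff[OF F_def G_def Q_def P_def] by (simp add: E1_def)
    also have "\<dots> \<longleftrightarrow> (\<forall>n. fps_nth E1 n = 0)"
    proof
      assume h: "\<forall>n\<ge>1. fps_nth E1 n = 0"
      show "\<forall>n. fps_nth E1 n = 0"
      proof
        fix n show "fps_nth E1 n = 0" using h E10 by (cases n) auto
      qed
    qed auto
    also have "\<dots> \<longleftrightarrow> E1 = 0" by (simp add: fps_eq_iff)
    finally show ?thesis .
  qed
  have ii: "(\<forall>n\<ge>1. 0 = (\<Sum>k=1..n. \<Sum>j=0..k-1. a j * a (k - 1 - j) * real (j + 1) * real (k - j) *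
              (fact (k - 1) / (2 * real k)) *
              (\<Sum>s=1..n. b s / (fact s * fact (n - s)) * bell_poly (n - s) (k - 1) b *
                 (real k * real s * (real s - 1) + real n * (real n - 1)))))
          \<longleftrightarrow> E2 = 0"
  proof -
    define W where "W = fps_X ^ 2 * fps_deriv (fps_deriv G) * (fps_deriv P oo G)"
    have W1: "fps_nth W 1 = 0" by (simp add: W_def mult.assoc fps_X_power_mult_nth)
    have W2: "fps_nth W (Suc (Suc m)) = fps_nth (fps_deriv (fps_deriv G) * (fps_deriv P oo G)) m" for m
      unfolding W_def mult.assoc fps_X_power_mult_nth by simp
    have E2m: "fps_nth E2 m = fps_nth W (Suc (Suc m)) + real (Suc (Suc m)) * (real (Suc (Suc m)) - 1) * fps_nth (P oo G) (Suc (Suc m))" for m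
    proof -
      have dd: "fps_nth (fps_deriv (fps_deriv K)) m = real (Suc (Suc m)) * (real (Suc (Suc m)) - 1) * fps_nth K (Suc (Suc m))" for K :: "real fps"
        by (simp add: algebra_simps)
      show ?thesis unfolding E2_def fps_add_nth dd W2 by simp
    qed
    have "(\<forall>n\<ge>1. 0 = (\<Sum>k=1..n. \<Sum>j=0..k-1. a j * a (k - 1 - j) * real (j + 1) * real (k - j) *
              (fact (k - 1) / (2 * real k)) *
              (\<Sum>s=1..n. b s / (fact s * fact (n - s)) * bell_poly (n - s) (k - 1) b *
                 (real k * real s * (real s - 1) + real n * (real n - 1)))))
        \<longleftrightarrow> (\<forall>n\<ge>1. fps_nth W n / 2 + real n * (real n - 1) / 2 * fps_nth (P oo G) n = 0)"
      using part2_coeff[OF F_def G_def P_def] by (simp add: W_def)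
    also have "\<dots> \<longleftrightarrow> (\<forall>m. fps_nth E2 m = 0)"
    proof
      assume h: "\<forall>n\<ge>1. fps_nth W n / 2 + real n * (real n - 1) / 2 * fps_nth (P oo G) n = 0"
      show "\<forall>m. fps_nth E2 m = 0"
      proof
        fix m
        have "fps_nth W (Suc (Suc m)) / 2 + real (Suc (Suc m)) * (real (Suc (Suc m)) - 1) / 2 * fps_nth (P oo G) (Suc (Suc m)) = 0"
          by (rule h[rule_format]) simp
        then show "fps_nth E2 m = 0" unfolding E2m by (simp add: field_simps)
      qed
    next
      assume h: "\<forall>m. fps_nth E2 m = 0"
      show "\<forall>n\<ge>1. fps_nth W n / 2 + real n * (real n - 1) / 2 * fps_nth (P oo G) n = 0"
      proof (intro allI impI)
        fix n :: nat assume n: "n \<ge> 1"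
        show "fps_nth W n / 2 + real n * (real n - 1) / 2 * fps_nth (P oo G) n = 0"
        proof (cases "n = 1")
          case True then show ?thesis using W1 by simp
        next
          case False
          then obtain m where m: "n = Suc (Suc m)" using n by (metis One_nat_def Suc_pred' diff_Suc_1 less_one not0_implies_Suc not_le)
          have "fps_nth E2 m = 0" using h by simp
          then show ?thesis unfolding m E2m by (simp add: field_simps)
        qed
      qed
    qed
    also have "\<dots> \<longleftrightarrow> E2 = 0" by (simp add: fps_eq_iff)
    finally show ?thesis .
  qed
  show ?thesis using conjI[OF i ii] by (simp only: E1_def E2_def)
qed

end
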